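(* In the setting described in the context, for any $s\in\{1,\dots,T\}$, any $k\in\{1,\dots,K\}$ and any $0<\beta<1$, $$\big(1-T^{\beta-1}\big)\|\mathbf{v}_k^*\|_2^2\le\|\mathbf{v}^*_{k\setminus s}\|_2^2\le\|\mathbf{v}_k^*\|_2^2$$ with probability at least $1-T^{-\beta}$.
   Context: Fixed inputs $\mathbf{x}_1,\dots,\mathbf{x}_N\in\mathbb{R}^d$. Networks $f_\theta(\mathbf{x})=\sum_{k=1}^K\mathbf{v}_k(\mathbf{w}_k^\top\mathbf{x}+b_k)_+$ with $\mathbf{w}_k\in\mathbb{S}^{d-1}$, $b_k\in\mathbb{R}$, $\mathbf{v}_k\in\mathbb{R}^T$, $K\ge N^2$. Training problem: $\min_\theta\sum_{i=1}^N\mathcal{L}(\mathbf{y}_i,f_\theta(\mathbf{x}_i))+\lambda\sum_{k=1}^K\|\mathbf{v}_k\|_2$, $\lambda>0$, with $\mathcal{L}(\mathbf{u},\mathbf{v})=\sum_t\mathcal{L}(u_t,v_t)$ separable across tasks and lower semicontinuous in its second argument. The task label vectors $\mathbf{y}_{\cdot,t}=(y_{1t},\dots,y_{Nt})$, $t=1,\dots,T$, are exchangeable random vectors. The optimal output weights $\mathbf{v}_k^*=(v^*_{k1},\dots,v^*_{kT})$ are selected by a measurable deterministic map of the labels that is permutation invariant: permuting the $T$ coordinates of all labels permutes the coordinates of all selected $\mathbf{v}_k^*$ in the same way. $\mathbf{v}^*_{k\setminus s}$ denotes $\mathbf{v}_k^*$ with its $s$-th entry removed. *)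

theory Defs
  imports "HOL-Analysis.Analysis" "HOL-Probability.Probability"
begin

definition lsc_fun :: "(real \<Rightarrow> real) \<Rightarrow> bool" where
  "lsc_fun f \<longleftrightarrow> (\<forall>x c. c < f x \<longrightarrow> (\<forall>\<^sub>F y in at x. c < f y))"

text \<open>Two-layer ReLU network with K = CARD('k) neurons, T = CARD('t) outputs.
  W $ k = w_k, b $ k = b_k, V $ k = v_k.\<close>
definition relu_net ::
  "real^'d^'k \<Rightarrow> real^'k \<Rightarrow> real^'t^'k \<Rightarrow> real^'d \<Rightarrow> real^'t" where
  "relu_net W b V x = (\<Sum>k\<in>UNIV. max 0 ((W $ k) \<bullet> x + b $ k) *\<^sub>R (V $ k))"

definition feasible_W :: "real^'d^'k \<Rightarrow> bool" where
  "feasible_W W \<longleftrightarrow> (\<forall>k. norm (W $ k) = 1)"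

text \<open>Training objective; labels Y $ i $ t = y_{it}, separable loss L.\<close>
definition train_obj ::
  "(real \<Rightarrow> real \<Rightarrow> real) \<Rightarrow> real \<Rightarrow> ('n \<Rightarrow> real^'d) \<Rightarrow> real^'t^'n
   \<Rightarrow> real^'d^'k \<Rightarrow> real^'k \<Rightarrow> real^'t^'k \<Rightarrow> real" where
  "train_obj L lam x Y W b V =
     (\<Sum>i\<in>UNIV. \<Sum>t\<in>UNIV. L (Y $ i $ t) (relu_net W b V (x i) $ t))
     + lam * (\<Sum>k\<in>UNIV. norm (V $ k))"

definition is_optimal ::
  "(real \<Rightarrow> real \<Rightarrow> real) \<Rightarrow> real \<Rightarrow> ('n \<Rightarrow> real^'d) \<Rightarrow> real^'t^'n
   \<Rightarrow> real^'d^'k \<Rightarrow> real^'k \<Rightarrow> real^'t^'k \<Rightarrow> bool" where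
  "is_optimal L lam x Y W b V \<longleftrightarrow> feasible_W W \<and>
     (\<forall>(W'::real^'d^'k) (b'::real^'k) (V'::real^'t^'k). feasible_W W' \<longrightarrow> train_obj L lam x Y W b V \<le> train_obj L lam x Y W' b' V')"

definition perm_tasks :: "('t \<Rightarrow> 't) \<Rightarrow> real^'t^'m \<Rightarrow> real^'t^'m" where
  "perm_tasks \<sigma> A = (\<chi> i t. A $ i $ (\<sigma> t))"

end

theory Submission
  imports Defs "HOL-Combinatorics.Permutations"
begin


lemma norm_sq_vec: "(norm (v::real^'t::finite))\<^sup>2 = (\<Sum>t\<in>UNIV. (v$t)\<^sup>2)"
  unfolding power2_norm_eq_inner inner_vec_def by (simp add: power2_eq_square)

lemma sum_perm_sq: assumes "\<sigma> permutes (UNIV::'t::finite set)"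
  shows "(\<Sum>t\<in>UNIV. (f (\<sigma> t))::real) = (\<Sum>t\<in>UNIV. f t)"
  using sum.permute[OF assms, of f] by (simp add: comp_def)

lemma meas_comp_cont:
  assumes "Vsel \<in> borel_measurable M" and "continuous_on UNIV h"
  shows "(\<lambda>y. h (Vsel y)) \<in> borel_measurable M"
  using measurable_comp[OF assms(1) borel_measurable_continuous_onI[OF assms(2)]]
  by (simp add: comp_def)

lemma meas_R: assumes "(Vsel :: _ \<Rightarrow> real^'t::finite^'k::finite) \<in> borel_measurable M"
  shows "(\<lambda>y. (Vsel y $ k $ t)\<^sup>2 / (norm (Vsel y $ k))\<^sup>2 :: real) \<in> borel_measurable M"
proof -
  have "(\<lambda>y. (Vsel y $ k $ t)\<^sup>2) \<in> borel_measurable M"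
    by (rule meas_comp_cont[OF assms, of "\<lambda>v. (v $ k $ t)\<^sup>2"]) (intro continuous_intros)
  moreover have "(\<lambda>y. (norm (Vsel y $ k))\<^sup>2) \<in> borel_measurable M"
    by (rule meas_comp_cont[OF assms, of "\<lambda>v. (norm (v $ k))\<^sup>2"]) (intro continuous_intros)
  ultimately show ?thesis by (rule borel_measurable_divide)
qed

lemma perm_meas: "perm_tasks \<sigma> \<in> borel_measurable (borel :: (real^'t::finite^'m::finite) measure)"
  unfolding perm_tasks_def
  by (intro borel_measurable_continuous_onI continuous_intros)

theorem lemma2:
  fixes M :: "'a measure"
    and x :: "'n::finite \<Rightarrow> real^'d::finite"
    and L :: "real \<Rightarrow> real \<Rightarrow> real"
    and lam :: real
    and Y :: "'a \<Rightarrow> real^'t::finite^'n"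
    and Wsel :: "real^'t^'n \<Rightarrow> real^'d^'k::finite"
    and bsel :: "real^'t^'n \<Rightarrow> real^'k"
    and Vsel :: "real^'t^'n \<Rightarrow> real^'t^'k"
    and s :: 't and k :: 'k and \<beta> :: real
  assumes K_ge: "CARD('k) \<ge> CARD('n)^2"
    and lam_pos: "lam > 0"
    and L_lsc: "\<And>u. lsc_fun (L u)"
    and P: "prob_space M"
    and Y_meas: "Y \<in> borel_measurable M"
    and exch: "\<And>\<sigma>. \<sigma> permutes (UNIV :: 't set) \<Longrightarrow>
                 distr M borel (\<lambda>\<omega>. perm_tasks \<sigma> (Y \<omega>)) = distr M borel Y"
    and Wsel_meas: "Wsel \<in> borel_measurable borel"
    and bsel_meas: "bsel \<in> borel_measurable borel"
    and Vsel_meas: "Vsel \<in> borel_measurable borel"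
    and opt: "\<And>\<omega>. \<omega> \<in> space M \<Longrightarrow>
                 is_optimal L lam x (Y \<omega>) (Wsel (Y \<omega>)) (bsel (Y \<omega>)) (Vsel (Y \<omega>))"
    and equiv: "\<And>\<sigma> y. \<sigma> permutes (UNIV :: 't set) \<Longrightarrow>
                 Vsel (perm_tasks \<sigma> y) = perm_tasks \<sigma> (Vsel y)"
    and beta: "0 < \<beta>" "\<beta> < 1"
  shows "measure M {\<omega> \<in> space M.
            (1 - real CARD('t) powr (\<beta> - 1)) * (norm (Vsel (Y \<omega>) $ k))\<^sup>2
              \<le> (\<Sum>t\<in>UNIV - {s}. (Vsel (Y \<omega>) $ k $ t)\<^sup>2)
          \<and> (\<Sum>t\<in>UNIV - {s}. (Vsel (Y \<omega>) $ k $ t)\<^sup>2) \<le> (norm (Vsel (Y \<omega>) $ k))\<^sup>2}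
         \<ge> 1 - real CARD('t) powr (- \<beta>)"
proof -
  interpret prob_space M by (rule P)
  define T where "T = real CARD('t)"
  define c where "c = T powr (\<beta> - 1)"
  have Tpos: "T > 0" unfolding T_def by simp
  have cpos: "c > 0" unfolding c_def using Tpos by simp
  define R where "R t y = (Vsel y $ k $ t)\<^sup>2 / (norm (Vsel y $ k))\<^sup>2" for t y
  have VY: "(\<lambda>\<omega>. Vsel (Y \<omega>)) \<in> borel_measurable M"
    using measurable_comp[OF Y_meas Vsel_meas] by (simp add: comp_def)
  have Rm: "R t \<in> borel_measurable borel" for t
    unfolding R_def by (rule meas_R[OF Vsel_meas])
  have YRm: "(\<lambda>\<omega>. R t (Y \<omega>)) \<in> borel_measurable M" for t
    unfolding R_def by (rule meas_R[OF VY])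
  have le_n: "(v $ t)\<^sup>2 \<le> (norm (v::real^'t))\<^sup>2" for v t
    unfolding norm_sq_vec by (rule member_le_sum) auto
  have R0: "0 \<le> R t y" for t y unfolding R_def by simp
  have R1: "R t y \<le> 1" for t y
    unfolding R_def using le_n[of "Vsel y $ k" t]
    by (cases "norm (Vsel y $ k) = 0") (auto simp: divide_le_eq_1)
  have int: "integrable M (\<lambda>\<omega>. R t (Y \<omega>))" for t
    by (rule integrable_const_bound[where B=1]) (use R0 R1 YRm in auto)
  have inv: "R t (perm_tasks \<sigma> y) = R (\<sigma> t) y" if sp: "\<sigma> permutes UNIV" for \<sigma> t y
  proof -
    have e: "Vsel (perm_tasks \<sigma> y) $ k $ u = Vsel y $ k $ \<sigma> u" for u
      using equiv[OF sp] by (simp add: perm_tasks_def)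
    have "(norm (Vsel (perm_tasks \<sigma> y) $ k))\<^sup>2 = (norm (Vsel y $ k))\<^sup>2"
      unfolding norm_sq_vec e using sum_perm_sq[OF sp, of "\<lambda>u. (Vsel y $ k $ u)\<^sup>2"] by simp
    then show ?thesis unfolding R_def e by simp
  qed
  have Eeq: "(\<integral>\<omega>. R t (Y \<omega>) \<partial>M) = (\<integral>\<omega>. R s (Y \<omega>) \<partial>M)" for t
  proof -
    define \<sigma> where "\<sigma> = Transposition.transpose s t"
    have sp: "\<sigma> permutes UNIV" unfolding \<sigma>_def by (rule permutes_swap_id) auto
    have pm: "(\<lambda>\<omega>. perm_tasks \<sigma> (Y \<omega>)) \<in> measurable M borel"
      using measurable_comp[OF Y_meas perm_meas] by (simp add: comp_def)
    have "(\<integral>\<omega>. R t (Y \<omega>) \<partial>M) = (\<integral>\<omega>. R s (perm_tasks \<sigma> (Y \<omega>)) \<partial>M)"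
      using inv[OF sp] by (simp add: \<sigma>_def)
    also have "\<dots> = integral\<^sup>L (distr M borel (\<lambda>\<omega>. perm_tasks \<sigma> (Y \<omega>))) (R s)"
      by (rule integral_distr[symmetric, OF pm Rm])
    also have "\<dots> = integral\<^sup>L (distr M borel Y) (R s)" using exch[OF sp] by simp
    also have "\<dots> = (\<integral>\<omega>. R s (Y \<omega>) \<partial>M)"
      by (rule integral_distr[OF Y_meas Rm])
    finally show ?thesis .
  qed
  have sumR: "(\<Sum>t\<in>UNIV. R t y) \<le> 1" for y
  proof (cases "norm (Vsel y $ k) = 0")
    case True then show ?thesis unfolding R_def by simp
  next
    case False
    have "(\<Sum>t\<in>UNIV. R t y) = (\<Sum>t\<in>UNIV. (Vsel y $ k $ t)\<^sup>2) / (norm (Vsel y $ k))\<^sup>2"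
      unfolding R_def by (simp add: sum_divide_distrib)
    also have "\<dots> = 1" using False unfolding norm_sq_vec[symmetric] by simp
    finally show ?thesis by simp
  qed
  have "T * (\<integral>\<omega>. R s (Y \<omega>) \<partial>M) = (\<Sum>t\<in>UNIV. (\<integral>\<omega>. R t (Y \<omega>) \<partial>M))"
  proof -
    have "(\<Sum>t\<in>UNIV. (\<integral>\<omega>. R t (Y \<omega>) \<partial>M)) = (\<Sum>t\<in>(UNIV::'t set). (\<integral>\<omega>. R s (Y \<omega>) \<partial>M))"
      by (rule sum.cong) (use Eeq in auto)
    then show ?thesis by (simp add: T_def)
  qed
  also have "\<dots> = (\<integral>\<omega>. (\<Sum>t\<in>UNIV. R t (Y \<omega>)) \<partial>M)"
    using Bochner_Integration.integral_sum[where I=UNIV and M=M and f="\<lambda>t \<omega>. R t (Y \<omega>)"] int by simp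
  also have "\<dots> \<le> (\<integral>\<omega>. 1 \<partial>M)"
    by (rule integral_mono) (use int sumR in auto)
  also have "\<dots> = 1" by (simp add: prob_space)
  finally have ER: "(\<integral>\<omega>. R s (Y \<omega>) \<partial>M) \<le> 1 / T" using Tpos by (simp add: field_simps)
  define bad where "bad = {\<omega> \<in> space M. c \<le> R s (Y \<omega>)}"
  have badm: "bad \<in> events" unfolding bad_def by (rule borel_measurable_le[OF borel_measurable_const YRm])
  have "prob bad \<le> (\<integral>\<omega>. R s (Y \<omega>) \<partial>M) / c"
    unfolding bad_def
    by (rule integral_Markov_inequality_measure[OF int _ _ cpos, of "space M"]) (use R0 in auto)
  also have "\<dots> \<le> (1 / T) / c" by (rule divide_right_mono[OF ER]) (use cpos in simp)
  also have "(1 / T) / c = T powr (- \<beta>)"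
    unfolding c_def using Tpos
    by (simp add: powr_diff powr_minus_divide)
  finally have pbad: "prob bad \<le> T powr (- \<beta>)" .
  define good where "good = {\<omega>\<in>space M.
            (1 - real CARD('t) powr (\<beta> - 1)) * (norm (Vsel (Y \<omega>) $ k))\<^sup>2
              \<le> (\<Sum>t\<in>UNIV - {s}. (Vsel (Y \<omega>) $ k $ t)\<^sup>2)
          \<and> (\<Sum>t\<in>UNIV - {s}. (Vsel (Y \<omega>) $ k $ t)\<^sup>2) \<le> (norm (Vsel (Y \<omega>) $ k))\<^sup>2}"
  have f1: "(\<lambda>\<omega>. (1 - real CARD('t) powr (\<beta> - 1)) * (norm (Vsel (Y \<omega>) $ k))\<^sup>2) \<in> borel_measurable M"
    by (rule meas_comp_cont[OF VY]) (intro continuous_intros)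
  have f2: "(\<lambda>\<omega>. (\<Sum>t\<in>UNIV - {s}. (Vsel (Y \<omega>) $ k $ t)\<^sup>2)) \<in> borel_measurable M"
    by (rule meas_comp_cont[OF VY]) (intro continuous_intros)
  have f3: "(\<lambda>\<omega>. (norm (Vsel (Y \<omega>) $ k))\<^sup>2) \<in> borel_measurable M"
    by (rule meas_comp_cont[OF VY]) (intro continuous_intros)
  have goodm: "good \<in> events" unfolding good_def
    by (rule sets.sets_Collect_conj[OF borel_measurable_le[OF f2 f3] borel_measurable_le[OF f1 f2]])
  have sub: "space M - bad \<subseteq> good"
  proof
    fix \<omega> assume w: "\<omega> \<in> space M - bad"
    define v where "v = Vsel (Y \<omega>) $ k"
    have lt: "R s (Y \<omega>) < c" using w unfolding bad_def by auto
    have rem: "(\<Sum>t\<in>UNIV - {s}. (v $ t)\<^sup>2) = (norm v)\<^sup>2 - (v $ s)\<^sup>2"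
      unfolding norm_sq_vec by (simp add: sum_diff1)
    have A: "(1 - c) * (norm v)\<^sup>2 \<le> (norm v)\<^sup>2 - (v $ s)\<^sup>2"
    proof (cases "norm v = 0")
      case True then show ?thesis using le_n[of v s] by simp
    next
      case False
      then have np: "(norm v)\<^sup>2 > 0" by simp
      have "(v $ s)\<^sup>2 / (norm v)\<^sup>2 < c" using lt unfolding R_def v_def by simp
      then have "(v $ s)\<^sup>2 < c * (norm v)\<^sup>2" using np by (simp add: divide_less_eq)
      then show ?thesis by (simp add: algebra_simps)
    qed
    have e1: "(1 - real CARD('t) powr (\<beta> - 1)) * (norm (Vsel (Y \<omega>) $ k))\<^sup>2
              \<le> (\<Sum>t\<in>UNIV - {s}. (Vsel (Y \<omega>) $ k $ t)\<^sup>2)"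
      using A rem unfolding v_def c_def T_def by linarith
    have e2: "(\<Sum>t\<in>UNIV - {s}. (Vsel (Y \<omega>) $ k $ t)\<^sup>2) \<le> (norm (Vsel (Y \<omega>) $ k))\<^sup>2"
      using rem zero_le_power2[of "v $ s"] unfolding v_def by linarith
    show "\<omega> \<in> good" unfolding good_def using w e1 e2 by blast
  qed
  have "prob good \<ge> prob (space M - bad)"
    by (rule finite_measure_mono[OF sub goodm])
  moreover have "prob (space M - bad) = 1 - prob bad" by (rule prob_compl[OF badm])
  ultimately show ?thesis using pbad unfolding good_def T_def by linarith
qed

end
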